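(* Suppose $\mathrm{char}(\mathbb{F})=0$ and $h\in\mathbb{F}[x]$. Then $$hA_h=[x,A_h]=[\hat y,A_h]=[A_h,A_h].$$
   Context: For $h\in\mathbb{F}[x]$, $A_h$ is the unital associative $\mathbb{F}$-algebra generated by $x,\hat y$ with defining relation $\hat yx-x\hat y=h$. For $b\in A_h$, $[b,A_h]=\{ba-ab: a\in A_h\}$ (a linear subspace), and $[A_h,A_h]$ is the linear span of all commutators $ab-ba$, $a,b\in A_h$. $hA_h$ is the right ideal generated by $h$ (which is a two-sided ideal since $h$ is normal). *)

theory Defs
  imports "HOL-Computational_Algebra.Polynomial"
begin

text \<open>Model of A_h: by the PBW basis x^i y^j, A_h is the Ore extension F[x][y; delta]
  with delta = h * d/dx.  An element sum_j f_j(x) y^j (coefficients written on the left)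
  is represented by the polynomial in y with coefficients f_j in F[x], i.e. 'a poly poly.
  Multiplication is the Ore/Leibniz rule y^j g = sum_i (j choose i) delta^i(g) y^(j-i).\<close>

definition wdelta :: "'a::idom poly \<Rightarrow> 'a poly \<Rightarrow> 'a poly" where
  "wdelta h g = h * pderiv g"

definition amul :: "'a::idom poly \<Rightarrow> 'a poly poly \<Rightarrow> 'a poly poly \<Rightarrow> 'a poly poly" where
  "amul h a b = (\<Sum>j\<le>degree a. \<Sum>k\<le>degree b. \<Sum>i\<le>j.
      monom (of_nat (j choose i) * coeff a j * (wdelta h ^^ i) (coeff b k)) (j - i + k))"

definition Ax :: "'a::idom poly poly" where "Ax = [:[:0, 1:]:]"
definition Ay :: "'a::idom poly poly" where "Ay = monom 1 1"
definition Apoly :: "'a::idom poly \<Rightarrow> 'a poly poly" where "Apoly f = [:f:]"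

inductive_set comm_span :: "'a::idom poly \<Rightarrow> 'a poly poly set" for h where
  zero: "0 \<in> comm_span h"
| comm: "amul h a b - amul h b a \<in> comm_span h"
| add: "u \<in> comm_span h \<Longrightarrow> v \<in> comm_span h \<Longrightarrow> u + v \<in> comm_span h"
| smult: "u \<in> comm_span h \<Longrightarrow> smult [:c:] u \<in> comm_span h"

end

theory Submission
  imports Defs
begin

definition hdv :: "'a::idom poly \<Rightarrow> 'a poly poly \<Rightarrow> bool" where
  "hdv h p = (\<forall>n. h dvd coeff p n)"

lemma hdv_0[simp]: "hdv h 0" by (simp add: hdv_def)
lemma hdv_add: "hdv h p \<Longrightarrow> hdv h q \<Longrightarrow> hdv h (p + q)" by (simp add: hdv_def)
lemma hdv_diff: "hdv h p \<Longrightarrow> hdv h q \<Longrightarrow> hdv h (p - q)" by (simp add: hdv_def)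
lemma hdv_sum: "(\<And>i. i \<in> A \<Longrightarrow> hdv h (f i)) \<Longrightarrow> hdv h (\<Sum>i\<in>A. f i)"
  by (induction A rule: infinite_finite_induct) (auto intro: hdv_add)
lemma hdv_monom: "h dvd c \<Longrightarrow> hdv h (monom c n)" by (simp add: hdv_def)
lemma hdv_smult: "hdv h p \<Longrightarrow> hdv h (smult c p)" by (simp add: hdv_def)

lemma wdelta_pow_0[simp]: "(wdelta h ^^ i) 0 = 0"
  by (induction i) (auto simp: wdelta_def)
lemma wdelta_pow_add: "(wdelta h ^^ i) (p + q) = (wdelta h ^^ i) p + (wdelta h ^^ i) q"
  by (induction i) (auto simp: wdelta_def pderiv_add distrib_left)
lemma wdelta_pow_one: "(wdelta h ^^ i) 1 = (if i = 0 then 1 else 0)"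
  by (induction i) (auto simp: wdelta_def)
lemma wdelta_pow_dvd: "i \<noteq> 0 \<Longrightarrow> h dvd (wdelta h ^^ i) g"
  by (cases i) (auto simp: wdelta_def)

definition amulN where
  "amulN h N M a b = (\<Sum>j\<le>N. \<Sum>k\<le>M. \<Sum>i\<le>j.
      monom (of_nat (j choose i) * coeff a j * (wdelta h ^^ i) (coeff b k)) (j - i + k))"

lemma amul_ext:
  assumes "degree a \<le> N" "degree b \<le> M"
  shows "amul h a b = amulN h N M a b"
proof -
  have "amulN h N M a b = (\<Sum>j\<le>degree a. \<Sum>k\<le>M. \<Sum>i\<le>j.
      monom (of_nat (j choose i) * coeff a j * (wdelta h ^^ i) (coeff b k)) (j - i + k))"
    unfolding amulN_def
    by (rule sum.mono_neutral_right) (use assms in \<open>auto simp: coeff_eq_0\<close>)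
  also have "\<dots> = amul h a b" unfolding amul_def
    apply (rule sum.cong, simp)
    by (rule sum.mono_neutral_right) (use assms in \<open>auto simp: coeff_eq_0\<close>)
  finally show ?thesis by simp
qed

lemma amul_add1: "amul h (a + b) c = amul h a c + amul h b c"
proof -
  let ?N = "max (degree a) (degree b)"
  have "degree (a + b) \<le> ?N" by (rule degree_add_le) auto
  then have "amul h (a + b) c = amulN h ?N (degree c) (a+b) c" by (rule amul_ext) simp
  moreover have "amul h a c = amulN h ?N (degree c) a c" by (rule amul_ext) auto
  moreover have "amul h b c = amulN h ?N (degree c) b c" by (rule amul_ext) auto
  ultimately show ?thesis
    by (simp add: amulN_def distrib_left distrib_right sum.distrib add_monom[symmetric])
qed

lemma amul_add2: "amul h a (b + c) = amul h a b + amul h a c"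
proof -
  let ?N = "max (degree b) (degree c)"
  have "degree (b + c) \<le> ?N" by (rule degree_add_le) auto
  then have "amul h a (b + c) = amulN h (degree a) ?N a (b + c)" by (rule amul_ext[rotated]) simp
  moreover have "amul h a b = amulN h (degree a) ?N a b" by (rule amul_ext) auto
  moreover have "amul h a c = amulN h (degree a) ?N a c" by (rule amul_ext) auto
  ultimately show ?thesis
    by (simp add: amulN_def wdelta_pow_add distrib_left distrib_right sum.distrib add_monom[symmetric])
qed

lemma amul_monom: "amul h (monom c j) (monom d k) =
   (\<Sum>i\<le>j. monom (of_nat (j choose i) * c * (wdelta h ^^ i) d) (j - i + k))"
proof -
  have "amul h (monom c j) (monom d k) = amulN h j k (monom c j) (monom d k)"
    by (rule amul_ext) (auto simp: degree_monom_le)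
  also have "\<dots> = (\<Sum>j'\<le>j. if j' = j then (\<Sum>k'\<le>k. if k' = k then (\<Sum>i\<le>j.
      monom (of_nat (j choose i) * c * (wdelta h ^^ i) d) (j - i + k)) else 0) else 0)"
    unfolding amulN_def
  proof (intro sum.cong refl, goal_cases)
    case (1 j')
    show ?case
    proof (cases "j' = j")
      case True
      have "\<And>k'. (\<Sum>i\<le>j. monom (of_nat (j choose i) * c * (wdelta h ^^ i) (coeff (monom d k) k')) (j - i + k'))
        = (if k' = k then (\<Sum>i\<le>j. monom (of_nat (j choose i) * c * (wdelta h ^^ i) d) (j - i + k)) else 0)"
        by auto
      with True show ?thesis by simp
    qed auto
  qed
  finally show ?thesis by simp
qed

lemma mult_as_sum: "a * b = (\<Sum>j\<le>degree a. \<Sum>k\<le>degree b. monom (coeff a j * coeff b k) (j + k))"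
proof -
  have "a * b = (\<Sum>j\<le>degree a. monom (coeff a j) j) * (\<Sum>k\<le>degree b. monom (coeff b k) k)"
    by (simp add: poly_as_sum_of_monoms)
  also have "\<dots> = (\<Sum>j\<le>degree a. \<Sum>k\<le>degree b. monom (coeff a j * coeff b k) (j + k))"
    by (simp add: sum_product mult_monom)
  finally show ?thesis .
qed

lemma amul_minus_mult: "hdv h (amul h a b - a * b)"
proof -
  have "amul h a b - a * b = (\<Sum>j\<le>degree a. \<Sum>k\<le>degree b. \<Sum>i\<in>{..j} - {0}.
      monom (of_nat (j choose i) * coeff a j * (wdelta h ^^ i) (coeff b k)) (j - i + k))"
    unfolding amul_def mult_as_sum[of a b] sum_subtractf[symmetric]
    by (intro sum.cong refl) (simp add: sum.remove[of "{.._}" 0])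
  also have "hdv h \<dots>"
    by (intro hdv_sum hdv_monom) (auto intro: dvd_mult wdelta_pow_dvd)
  finally show ?thesis .
qed

lemma comm_hd: "hdv h (amul h a b - amul h b a)"
proof -
  have "amul h a b - amul h b a = (amul h a b - a * b) - (amul h b a - b * a)"
    by (simp add: mult.commute)
  then show ?thesis by (metis hdv_diff amul_minus_mult)
qed

lemma amul_0_1[simp]: "amul h 0 b = 0" using amul_add1[of h 0 0 b] by (metis add.right_neutral add_cancel_right_right)
lemma amul_0_2[simp]: "amul h a 0 = 0" using amul_add2[of h a 0 0] by (metis add.right_neutral add_cancel_right_right)

definition CS where "CS h b = {amul h b a - amul h a b | a. True}"

lemma CS_0: "0 \<in> CS h b" unfolding CS_def by (rule CollectI, rule exI[of _ 0]) simp
lemma CS_add: "p \<in> CS h b \<Longrightarrow> q \<in> CS h b \<Longrightarrow> p + q \<in> CS h b"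
proof -
  assume "p \<in> CS h b" "q \<in> CS h b"
  then obtain a1 a2 where "p = amul h b a1 - amul h a1 b" "q = amul h b a2 - amul h a2 b"
    unfolding CS_def by blast
  then have "p + q = amul h b (a1 + a2) - amul h (a1 + a2) b"
    by (simp add: amul_add1 amul_add2)
  then show ?thesis unfolding CS_def by blast
qed
lemma CS_sum: "(\<And>i. i \<in> A \<Longrightarrow> f i \<in> CS h b) \<Longrightarrow> (\<Sum>i\<in>A. f i) \<in> CS h b"
  by (induction A rule: infinite_finite_induct) (auto intro: CS_add CS_0)

lemma CS_of_monoms:
  assumes "\<And>c n. h dvd c \<Longrightarrow> monom c n \<in> CS h b" "hdv h p"
  shows "p \<in> CS h b"
proof -
  have "(\<Sum>i\<le>degree p. monom (coeff p i) i) \<in> CS h b"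
    using assms by (intro CS_sum) (auto simp: hdv_def)
  then show ?thesis by (simp add: poly_as_sum_of_monoms)
qed

lemma pderiv_surj: "\<exists>G. pderiv G = (g::'a::field_char_0 poly)"
proof -
  have "pderiv (\<Sum>n\<le>degree g. monom (coeff g n / of_nat (Suc n)) (Suc n))
     = (\<Sum>n\<le>degree g. pderiv (monom (coeff g n / of_nat (Suc n)) (Suc n)))"
    using higher_pderiv_sum[of 1] by simp
  also have "\<dots> = (\<Sum>n\<le>degree g. monom (coeff g n) n)"
    by (intro sum.cong refl) (simp add: pderiv_monom del: of_nat_Suc)
  also have "\<dots> = g" by (simp add: poly_as_sum_of_monoms)
  finally show ?thesis by blast
qed

lemma Ay_monom: "amul h Ay (monom G n) - amul h (monom G n) Ay = monom (h * pderiv G) n"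
proof -
  have 1: "amul h Ay (monom G n) = monom G (Suc n) + monom (h * pderiv G) n"
    unfolding Ay_def amul_monom by (simp add: wdelta_def)
  have "amul h (monom G n) Ay = (\<Sum>i\<le>n. if i = 0 then monom G (Suc n) else 0)"
    unfolding Ay_def amul_monom by (intro sum.cong refl) (simp add: wdelta_pow_one)
  then have 2: "amul h (monom G n) Ay = monom G (Suc n)" by simp
  show ?thesis using 1 2 by simp
qed

lemma hdv_CS_Ay:
  fixes h :: "'a::field_char_0 poly"
  assumes "hdv h p" shows "p \<in> CS h Ay"
proof (rule CS_of_monoms[OF _ assms])
  fix c n assume "h dvd c"
  then obtain g where g: "c = h * g" by blast
  obtain G where "pderiv G = g" using pderiv_surj by blast
  then have "monom c n = amul h Ay (monom G n) - amul h (monom G n) Ay"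
    by (simp add: Ay_monom g)
  then show "monom c n \<in> CS h Ay" unfolding CS_def by blast
qed

lemma Ax_monom: "amul h Ax (monom f m) - amul h (monom f m) Ax =
   - (\<Sum>i\<in>{1..m}. monom (of_nat (m choose i) * f * (wdelta h ^^ i) [:0,1:]) (m - i))"
proof -
  have Ax: "Ax = monom [:0,1:] 0" by (simp add: Ax_def monom_0)
  have 1: "amul h Ax (monom f m) = monom (f * [:0,1:]) m"
    unfolding Ax amul_monom by (simp add: mult.commute)
  have "{..m} = insert 0 {1..m}" by auto
  then have 2: "amul h (monom f m) Ax = monom (f * [:0,1:]) m +
     (\<Sum>i\<in>{1..m}. monom (of_nat (m choose i) * f * (wdelta h ^^ i) [:0,1:]) (m - i))"
    unfolding Ax amul_monom by simp
  show ?thesis using 1 2 by simp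
qed

lemma hdv_CS_Ax:
  fixes h :: "'a::field_char_0 poly"
  assumes "hdv h p" shows "p \<in> CS h Ax"
proof (rule CS_of_monoms[OF _ assms])
  fix c n assume "h dvd c"
  then show "monom c n \<in> CS h Ax"
  proof (induction n arbitrary: c rule: less_induct)
    case (less n)
    obtain g where g: "c = h * g" using less.prems by blast
    define f where "f = smult (- 1 / of_nat (Suc n)) g"
    define T where "T i = monom (of_nat (Suc n choose i) * f * (wdelta h ^^ i) [:0,1:]) (Suc n - i)" for i
    have ins: "{1..Suc n} = insert 1 {2..Suc n}" by auto
    have "amul h Ax (monom f (Suc n)) - amul h (monom f (Suc n)) Ax = - (T 1 + (\<Sum>i\<in>{2..Suc n}. T i))"
      unfolding Ax_monom T_def ins by simp
    moreover
    have key: "smult (1 / of_nat (Suc n)) (of_nat (Suc n) * q) = q" for q :: "'a poly"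
      by (simp add: of_nat_poly del: of_nat_Suc)
    have "T 1 = - monom c n"
      using key[of "g * h"] unfolding T_def f_def g by (simp add: wdelta_def pderiv_pCons minus_monom mult_ac del: of_nat_Suc)
    ultimately have eq: "monom c n = (amul h Ax (monom f (Suc n)) - amul h (monom f (Suc n)) Ax)
       + (\<Sum>i\<in>{2..Suc n}. T i)" by (simp add: algebra_simps)
    have "(\<Sum>i\<in>{2..Suc n}. T i) \<in> CS h Ax"
    proof (rule CS_sum)
      fix i assume i: "i \<in> {2..Suc n}"
      then have "h dvd of_nat (Suc n choose i) * f * (wdelta h ^^ i) [:0,1:]"
        by (intro dvd_mult wdelta_pow_dvd) auto
      moreover have "Suc n - i < n" using i by auto
      ultimately show "T i \<in> CS h Ax" unfolding T_def using less.IH by blast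
    qed
    moreover have "amul h Ax (monom f (Suc n)) - amul h (monom f (Suc n)) Ax \<in> CS h Ax"
      unfolding CS_def by blast
    ultimately show ?case using eq CS_add by metis
  qed
qed

lemma CS_hdv: "p \<in> CS h b \<Longrightarrow> hdv h p"
  unfolding CS_def using comm_hd by blast

lemma comm_span_hdv: "p \<in> comm_span h \<Longrightarrow> hdv h p"
  by (induction rule: comm_span.induct) (auto intro: hdv_add hdv_smult comm_hd)

lemma Apoly_mul: "amul h (Apoly h) a = smult h a"
proof (rule poly_eqI)
  fix n
  have "coeff (amul h (Apoly h) a) n = (\<Sum>k\<le>degree a. if k = n then h * coeff a k else 0)"
    unfolding amul_def Apoly_def by (simp add: coeff_sum)
  also have "\<dots> = h * coeff a n" by (auto simp: coeff_eq_0)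
  finally show "coeff (amul h (Apoly h) a) n = coeff (smult h a) n" by simp
qed

lemma S_eq: fixes h :: "'a::field poly" shows "{amul h (Apoly h) a | a. True} = {p. hdv h p}"
proof (intro set_eqI iffI)
  fix p assume "p \<in> {amul h (Apoly h) a | a. True}"
  then show "p \<in> {p. hdv h p}" by (auto simp: Apoly_mul hdv_def)
next
  fix p assume "p \<in> {p. hdv h p}"
  then have hp: "hdv h p" by simp
  have "p = smult h (map_poly (\<lambda>c. c div h) p)"
  proof (rule poly_eqI)
    fix n show "coeff p n = coeff (smult h (map_poly (\<lambda>c. c div h) p)) n"
      using hp by (simp add: coeff_map_poly hdv_def)
  qed
  then show "p \<in> {amul h (Apoly h) a | a. True}" by (auto simp: Apoly_mul)
qed

theorem proposition6p2:
  fixes h :: "'a::field_char_0 poly"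
  shows "{amul h (Apoly h) a | a. True} = {amul h Ax a - amul h a Ax | a. True}
       \<and> {amul h Ax a - amul h a Ax | a. True} = {amul h Ay a - amul h a Ay | a. True}
       \<and> {amul h Ay a - amul h a Ay | a. True} = comm_span h"
proof -
  have X: "{amul h Ax a - amul h a Ax | a. True} = {p. hdv h p}"
    using hdv_CS_Ax CS_hdv unfolding CS_def by blast
  have Y: "{amul h Ay a - amul h a Ay | a. True} = {p. hdv h p}"
    using hdv_CS_Ay CS_hdv unfolding CS_def by blast
  have "comm_span h = {p. hdv h p}"
  proof (intro set_eqI iffI)
    fix p assume "p \<in> comm_span h" then show "p \<in> {p. hdv h p}" by (simp add: comm_span_hdv)
  next
    fix p assume "p \<in> {p. hdv h p}"
    then have "p \<in> {amul h Ay a - amul h a Ay | a. True}" using Y by simp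
    then show "p \<in> comm_span h" by (auto intro: comm_span.comm)
  qed
  then show ?thesis using X Y S_eq by simp
qed

end
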